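(* Let $X$ be a $2$-dimensional regular polyhedral Banach space with $2n$ extreme points ($n\ge2$), and let $x\in\operatorname{Ext}B_X$. Then $$\operatorname{diam}J(x)=\mathcal{E}(X)=\begin{cases}2\tan\frac{\pi}{2n}&\text{if } n \text{ is even},\\[2pt] 2\tan\frac{\pi}{2n}\,\sin\frac{(n-1)\pi}{2n}&\text{if } n\text{ is odd}.\end{cases}$$
   Context: A $2$-dimensional regular polyhedral Banach space with $2n$ extreme points is $\mathbb{R}^2$ equipped with the norm whose closed unit ball $B_X$ is a (centrally symmetric, centered at the origin) polygon with $2n$ vertices, all of whose edges have the same Euclidean length and all of whose interior angles are equal. $\operatorname{Ext}B_X$ is the set of extreme points (vertices) of $B_X$. For $x\neq\theta$, $J(x)=\{f\in S_{X^*}:f(x)=\|x\|\}$, $\operatorname{diam}J(x)=\sup_{f,g\in J(x)}\|f-g\|$ (dual norm), and $\mathcal{E}(X)=\sup\{\operatorname{diam}J(x):x\in S_X\}$. *)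

theory Defs
  imports "HOL-Analysis.Analysis"
begin

definition poly_vertex :: "nat \<Rightarrow> real \<Rightarrow> real \<Rightarrow> nat \<Rightarrow> real^2" where
  "poly_vertex n r th k = vector [r * cos (th + real k * pi / real n), r * sin (th + real k * pi / real n)]"

text \<open>Closed unit ball of the 2-dimensional regular polyhedral space: the convex hull
  of the 2n vertices.\<close>
definition reg_ball :: "nat \<Rightarrow> real \<Rightarrow> real \<Rightarrow> (real^2) set" where
  "reg_ball n r th = convex hull {poly_vertex n r th k | k. k < 2 * n}"

text \<open>The norm whose closed unit ball is B (Minkowski functional).\<close>
definition bnorm :: "(real^2) set \<Rightarrow> real^2 \<Rightarrow> real" where
  "bnorm B x = Inf {t. 0 < t \<and> x \<in> (\<lambda>y. t *\<^sub>R y) ` B}"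

definition dnorm :: "(real^2) set \<Rightarrow> (real^2 \<Rightarrow> real) \<Rightarrow> real" where
  "dnorm B f = Sup {\<bar>f x\<bar> | x. bnorm B x \<le> 1}"

definition Jset :: "(real^2) set \<Rightarrow> real^2 \<Rightarrow> (real^2 \<Rightarrow> real) set" where
  "Jset B x = {f. linear f \<and> dnorm B f = 1 \<and> f x = bnorm B x}"

definition diamJ :: "(real^2) set \<Rightarrow> real^2 \<Rightarrow> real" where
  "diamJ B x = Sup {dnorm B (\<lambda>y. f y - g y) | f g. f \<in> Jset B x \<and> g \<in> Jset B x}"

definition calE :: "(real^2) set \<Rightarrow> real" where
  "calE B = Sup {diamJ B x | x. bnorm B x = 1}"

end

theory Submission
  imports Defs
begin


lemma cos_periodic_int: "cos (x + real_of_int m * (2 * pi)) = cos x"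
proof -
  have "real_of_int m * (2 * pi) = 2 * pi * real_of_int m" by simp
  thus ?thesis by (simp only: cos_add sin_int_2pin cos_int_2pin)
qed
lemma sin_periodic_int: "sin (x + real_of_int m * (2 * pi)) = sin x"
proof -
  have "real_of_int m * (2 * pi) = 2 * pi * real_of_int m" by simp
  thus ?thesis by (simp only: sin_add sin_int_2pin cos_int_2pin)
qed

lemma L_cos:
  fixes q :: int and n :: nat
  assumes "n \<ge> 1" "odd q"
  shows "cos (real_of_int q * (pi / (2 * real n))) \<le> cos (pi / (2 * real n))"
proof -
  define a where "a = pi / (2 * real n)"
  have a0: "a > 0" using assms by (simp add: a_def)
  have ha: "2 * real n * a = pi" using assms by (simp add: a_def)
  define N where "N = 4 * int n"
  define \<rho> where "\<rho> = q mod N"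
  define l where "l = q div N"
  have N0: "N > 0" using assms by (simp add: N_def)
  have q: "q = N * l + \<rho>" by (simp add: \<rho>_def l_def)
  have r0: "0 \<le> \<rho>" "\<rho> < N" using N0 by (auto simp: \<rho>_def)
  have rodd: "odd \<rho>" using assms(2) q by (simp add: N_def)
  hence r1: "1 \<le> \<rho>" using r0 by (cases "\<rho> = 0") auto
  have "real_of_int q * a = real_of_int \<rho> * a + real_of_int l * (2 * pi)"
    using q ha by (simp add: N_def algebra_simps)
  hence eq: "cos (real_of_int q * a) = cos (real_of_int \<rho> * a)"
    by (simp add: cos_periodic_int)
  show ?thesis
  proof (cases "\<rho> \<le> 2 * int n")
    case True
    have "cos (real_of_int \<rho> * a) \<le> cos a"
    proof (rule cos_monotone_0_pi_le)
      show "0 \<le> a" using a0 by simp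
      show "a \<le> real_of_int \<rho> * a" using r1 a0 by simp
      have "real_of_int \<rho> * a \<le> (2 * real n) * a"
        using True a0 by (intro mult_right_mono) (auto simp: of_int_le_iff[symmetric])
      thus "real_of_int \<rho> * a \<le> pi" using ha by simp
    qed
    thus ?thesis using eq by (simp add: a_def)
  next
    case False
    have rr: "real_of_int (N - \<rho>) * a = 2 * pi - real_of_int \<rho> * a"
      using ha by (simp add: N_def algebra_simps)
    have "cos (real_of_int (N - \<rho>) * a) \<le> cos a"
    proof (rule cos_monotone_0_pi_le)
      show "0 \<le> a" using a0 by simp
      have "1 \<le> N - \<rho>" using r0 by simp
      hence "(1::real) \<le> real_of_int (N - \<rho>)" by linarith
      thus "a \<le> real_of_int (N - \<rho>) * a" using mult_right_mono[of 1 "real_of_int (N - \<rho>)" a] a0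
        by simp
      have "N - \<rho> \<le> 2 * int n" using False by (simp add: N_def)
      hence "real_of_int (N - \<rho>) * a \<le> (2 * real n) * a"
        using a0 by (intro mult_right_mono) (auto simp: of_int_le_iff[symmetric])
      thus "real_of_int (N - \<rho>) * a \<le> pi" using ha by simp
    qed
    moreover have "cos (real_of_int (N - \<rho>) * a) = cos (real_of_int \<rho> * a)"
      unfolding rr by (simp add: cos_diff)
    ultimately show ?thesis using eq by (simp add: a_def)
  qed
qed

lemma L_cos_abs:
  fixes q :: int and n :: nat
  assumes "n \<ge> 1" "odd q"
  shows "\<bar>cos (real_of_int q * (pi / (2 * real n)))\<bar> \<le> cos (pi / (2 * real n))"
proof -
  have "cos (real_of_int (q + 2 * int n) * (pi / (2 * real n))) \<le> cos (pi / (2 * real n))"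
    using assms by (intro L_cos) auto
  moreover have "real_of_int (q + 2 * int n) * (pi / (2 * real n)) = real_of_int q * (pi / (2 * real n)) + pi"
    using assms by (simp add: field_simps)
  ultimately have "- cos (real_of_int q * (pi / (2 * real n))) \<le> cos (pi / (2 * real n))"
    by simp
  thus ?thesis using L_cos[OF assms] by linarith
qed

lemma L_sin_odd:
  fixes m :: int and n :: nat
  assumes "n \<ge> 1" "odd n"
  shows "\<bar>sin (real_of_int m * (pi / real n))\<bar> \<le> cos (pi / (2 * real n))"
proof -
  have "sin (real_of_int m * (pi / real n)) = cos (real_of_int (int n - 2 * m) * (pi / (2 * real n)))"
    using assms by (simp add: cos_sin_eq field_simps)
  moreover have "odd (int n - 2 * m)" using assms by simp
  ultimately show ?thesis using L_cos_abs[OF assms(1)] by metis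
qed


definition pt :: "real \<Rightarrow> real \<Rightarrow> real^2" where
  "pt r \<psi> = vector [r * cos \<psi>, r * sin \<psi>]"
definition VV :: "nat \<Rightarrow> real \<Rightarrow> real \<Rightarrow> int \<Rightarrow> real^2" where
  "VV n r th K = pt r (th + real_of_int K * (pi / real n))"
definition WW :: "nat \<Rightarrow> real \<Rightarrow> real \<Rightarrow> int \<Rightarrow> real^2" where
  "WW n r th K = vector [- r * sin (th + real_of_int K * (pi / real n)), r * cos (th + real_of_int K * (pi / real n))]"
definition lf :: "real \<Rightarrow> real \<Rightarrow> real^2 \<Rightarrow> real" where
  "lf c d y = c * y$1 + d * y$2"
definition FF :: "nat \<Rightarrow> real \<Rightarrow> real \<Rightarrow> int \<Rightarrow> real \<Rightarrow> real^2 \<Rightarrow> real" where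
  "FF n r th K s = (let \<phi> = th + real_of_int K * (pi / real n) in
     lf ((cos \<phi> - s * sin \<phi>) / r) ((sin \<phi> + s * cos \<phi>) / r))"

lemma linear_lf: "linear (lf c d)"
  by (rule linearI) (auto simp: lf_def algebra_simps)

lemma linear_FF: "linear (FF n r th K s)"
  by (simp add: FF_def Let_def linear_lf)

lemma linear_diff': "linear f \<Longrightarrow> linear g \<Longrightarrow> linear (\<lambda>x. f x - g x)"
  by (rule linearI) (auto simp: linear_add linear_cmul algebra_simps)

lemma pt_rot: "pt r (\<phi> + d) = cos d *\<^sub>R pt r \<phi> + sin d *\<^sub>R vector [- r * sin \<phi>, r * cos \<phi>]"
  by (simp add: pt_def vec_eq_iff forall_2 cos_add sin_add algebra_simps)

lemma VV_rot: "VV n r th J = cos (real_of_int (J - K) * (pi / real n)) *\<^sub>R VV n r th K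
   + sin (real_of_int (J - K) * (pi / real n)) *\<^sub>R WW n r th K"
proof -
  have "th + real_of_int J * (pi / real n) = (th + real_of_int K * (pi / real n)) + real_of_int (J - K) * (pi / real n)"
    by (simp add: algebra_simps)
  thus ?thesis unfolding VV_def WW_def by (simp only: pt_rot)
qed

lemma lin_VV: "linear f \<Longrightarrow> f (VV n r th J) = cos (real_of_int (J - K) * (pi / real n)) * f (VV n r th K)
   + sin (real_of_int (J - K) * (pi / real n)) * f (WW n r th K)"
  by (subst VV_rot[of _ _ _ J K]) (simp add: linear_add linear_cmul)

lemma FF_VV: assumes "r > 0" shows "FF n r th K s (VV n r th K) = 1"
  using assms by (simp add: FF_def Let_def lf_def VV_def pt_def field_simps) (simp add: algebra_simps flip: distrib_left)

lemma FF_WW: assumes "r > 0" shows "FF n r th K s (WW n r th K) = s"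
  using assms by (simp add: FF_def Let_def lf_def WW_def field_simps) (simp add: algebra_simps flip: distrib_left)

lemma FF_VVJ: assumes "r > 0"
  shows "FF n r th K s (VV n r th J) = cos (real_of_int (J - K) * (pi / real n)) + s * sin (real_of_int (J - K) * (pi / real n))"
  using lin_VV[OF linear_FF[of n r th K s], where n=n and r=r and th=th and J=J and K=K] FF_VV[OF assms] FF_WW[OF assms] by simp




definition vset :: "nat \<Rightarrow> real \<Rightarrow> real \<Rightarrow> (real^2) set" where
  "vset n r th = {poly_vertex n r th k | k. k < 2 * n}"

lemma pv_VV: "poly_vertex n r th k = VV n r th (int k)"
  by (simp add: poly_vertex_def VV_def pt_def)

lemma tan_aux1: fixes a x :: real assumes "cos a > 0" shows "cos x + tan a * sin x = cos (x - a) / cos a"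
proof -
  have "cos a \<noteq> 0" using assms by simp
  thus ?thesis by (simp add: cos_diff tan_def field_simps)
qed
lemma tan_aux2: fixes a x :: real assumes "cos a > 0" shows "cos x + - tan a * sin x = cos (x + a) / cos a"
proof -
  have "cos a \<noteq> 0" using assms by simp
  thus ?thesis by (simp add: cos_add tan_def field_simps)
qed

lemma FF_formula:
  assumes "n \<ge> 2" "r > 0"
  shows "FF n r th K (tan (pi / (2 * real n))) (VV n r th J) =
           cos (real_of_int (2 * (J - K) - 1) * (pi / (2 * real n))) / cos (pi / (2 * real n))"
    and "FF n r th K (- tan (pi / (2 * real n))) (VV n r th J) =
           cos (real_of_int (2 * (J - K) + 1) * (pi / (2 * real n))) / cos (pi / (2 * real n))"
proof -
  define a where "a = pi / (2 * real n)"
  have a0: "0 < a" "a < pi / 2" using assms by (auto simp: a_def field_simps)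
  have ca: "cos a > 0" using a0 by (intro cos_gt_zero) auto
  have h: "real_of_int (J - K) * (pi / real n) = real_of_int (2 * (J - K)) * a"
    using assms by (simp add: a_def field_simps)
  have e1: "real_of_int (2 * (J - K) - 1) * a = real_of_int (2 * (J - K)) * a - a" by (simp add: algebra_simps)
  have e2: "real_of_int (2 * (J - K) + 1) * a = real_of_int (2 * (J - K)) * a + a" by (simp add: algebra_simps)
  show "FF n r th K (tan (pi / (2 * real n))) (VV n r th J) =
           cos (real_of_int (2 * (J - K) - 1) * (pi / (2 * real n))) / cos (pi / (2 * real n))"
    unfolding FF_VVJ[OF assms(2)] h a_def[symmetric] e1 using ca
    by (simp only: tan_aux1)
  show "FF n r th K (- tan (pi / (2 * real n))) (VV n r th J) =
           cos (real_of_int (2 * (J - K) + 1) * (pi / (2 * real n))) / cos (pi / (2 * real n))"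
    unfolding FF_VVJ[OF assms(2)] h a_def[symmetric] e2 using ca
    by (simp only: tan_aux2)
qed

lemma FF_bound:
  assumes "n \<ge> 2" "r > 0" "s = tan (pi / (2 * real n)) \<or> s = - tan (pi / (2 * real n))"
  shows "\<bar>FF n r th K s (VV n r th J)\<bar> \<le> 1"
proof -
  define a where "a = pi / (2 * real n)"
  have a0: "0 < a" "a < pi / 2" using assms(1) by (auto simp: a_def field_simps)
  have ca: "cos a > 0" using a0 by (intro cos_gt_zero) auto
  have *: "\<bar>cos (real_of_int q * a) / cos a\<bar> \<le> 1" if "odd q" for q
  proof -
    have "\<bar>cos (real_of_int q * a)\<bar> \<le> cos a" using L_cos_abs[of n q] assms(1) that by (simp add: a_def)
    thus ?thesis using ca by (simp add: abs_divide field_simps)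
  qed
  from assms(3) show ?thesis
  proof
    assume s: "s = tan (pi / (2 * real n))"
    have e: "FF n r th K s (VV n r th J) = cos (real_of_int (2 * (J - K) - 1) * a) / cos a"
      unfolding s a_def by (rule FF_formula(1)[OF assms(1,2)])
    have "odd (2 * (J - K) - 1)" by simp
    from *[OF this] show ?thesis unfolding e .
  next
    assume s: "s = - tan (pi / (2 * real n))"
    have e: "FF n r th K s (VV n r th J) = cos (real_of_int (2 * (J - K) + 1) * a) / cos a"
      unfolding s a_def by (rule FF_formula(2)[OF assms(1,2)])
    have "odd (2 * (J - K) + 1)" by simp
    from *[OF this] show ?thesis unfolding e .
  qed
qed

lemma FF_next:
  assumes "n \<ge> 2" "r > 0"
  shows "FF n r th K (tan (pi / (2 * real n))) (VV n r th (K + 1)) = 1"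
proof -
  have c: "cos (pi / (2 * real n)) > 0" using assms(1)
    by (intro cos_gt_zero) (auto simp: field_simps)
  have "real_of_int (2 * (K + 1 - K) - 1) * (pi / (2 * real n)) = pi / (2 * real n)" by simp
  thus ?thesis using FF_formula(1)[OF assms, of th K "K+1"] c by (simp only:) simp
qed

context
  fixes n :: nat and r th :: real
  assumes n2: "2 \<le> n" and rpos: "0 < r"
begin

lemma VV_in: "VV n r th K \<in> vset n r th"
proof -
  define k where "k = nat (K mod (2 * int n))"
  define l where "l = K div (2 * int n)"
  have n0: "0 < 2 * int n" using n2 by simp
  have m0: "0 \<le> K mod (2 * int n)" using n0 by simp
  have k: "int k = K mod (2 * int n)" unfolding k_def using m0 by simp
  have "K mod (2 * int n) < 2 * int n" using n0 by simp
  hence kl: "k < 2 * n" using k by linarith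
  have KK: "K = 2 * int n * l + int k" using k unfolding l_def by simp
  have rK: "real_of_int K = 2 * real n * real_of_int l + real k"
    by (subst KK) simp
  have nz: "real n \<noteq> 0" using n2 by simp
  have ang: "th + real_of_int K * (pi / real n) = (th + real k * pi / real n) + real_of_int l * (2 * pi)"
    unfolding rK using nz by (simp add: field_simps)
  have "VV n r th K = poly_vertex n r th k"
    unfolding VV_def pt_def ang poly_vertex_def cos_periodic_int sin_periodic_int ..
  thus ?thesis using kl by (auto simp: vset_def)
qed

lemma vset_VV: "v \<in> vset n r th \<Longrightarrow> \<exists>K. v = VV n r th K"
  unfolding vset_def using pv_VV by blast

lemma B_hull: "reg_ball n r th = convex hull (vset n r th)"
  unfolding reg_ball_def vset_def ..

lemma convex_B: "convex (reg_ball n r th)"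
  unfolding B_hull by (rule convex_convex_hull)

lemma VV_B: "VV n r th K \<in> reg_ball n r th"
  unfolding B_hull by (rule hull_inc[OF VV_in])

lemma VV_n: "VV n r th (K + int n) = - VV n r th K"
proof -
  have "th + real_of_int (K + int n) * (pi / real n) = (th + real_of_int K * (pi / real n)) + pi"
    using n2 by (simp add: field_simps)
  thus ?thesis unfolding VV_def by (simp only:) (simp add: pt_def vec_eq_iff forall_2 cos_periodic_pi sin_periodic_pi)
qed

lemma zero_B: "0 \<in> reg_ball n r th"
proof -
  have "(1/2) *\<^sub>R VV n r th 0 + (1/2) *\<^sub>R VV n r th (0 + int n) \<in> reg_ball n r th"
    by (rule convexD[OF convex_B VV_B VV_B]) auto
  moreover have "VV n r th (int n) = - VV n r th 0" using VV_n[of 0] by simp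
  ultimately show ?thesis by simp
qed

lemma hull_bound:
  assumes "linear (g :: real^2 \<Rightarrow> real)" "\<And>J. g (VV n r th J) \<le> M" "z \<in> reg_ball n r th"
  shows "g z \<le> M"
proof -
  have "convex {z. g z \<le> M}"
  proof (rule convexI)
    fix x y :: "real^2" and u v :: real
    assume "x \<in> {z. g z \<le> M}" "y \<in> {z. g z \<le> M}" "0 \<le> u" "0 \<le> v" "u + v = 1"
    hence "u * g x + v * g y \<le> u * M + v * M"
      by (intro add_mono mult_left_mono) auto
    moreover have "u * M + v * M = M" using \<open>u + v = 1\<close> by (metis distrib_right mult_1)
    ultimately show "u *\<^sub>R x + v *\<^sub>R y \<in> {z. g z \<le> M}"
      by (simp add: linear_add[OF assms(1)] linear_cmul[OF assms(1)])
  qed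
  moreover have "vset n r th \<subseteq> {z. g z \<le> M}" using assms(2) vset_VV by auto
  ultimately have "reg_ball n r th \<subseteq> {z. g z \<le> M}"
    unfolding B_hull by (rule hull_minimal[rotated])
  thus ?thesis using assms(3) by auto
qed

end




lemma cone_trig_key:
  fixes h d p :: real
  shows "sin (h - d) * cos p + sin d * cos (p + h) = sin h * cos (p + d)"
    and "sin (h - d) * sin p + sin d * sin (p + h) = sin h * sin (p + d)"
  by (simp_all add: sin_diff cos_add sin_add algebra_simps)

lemma cone_trig:
  fixes h d p r \<rho> :: real
  assumes "sin h \<noteq> 0" "r \<noteq> 0"
  shows "\<rho> * cos (p + d) = \<rho> * sin (h - d) / (r * sin h) * (r * cos p) + \<rho> * sin d / (r * sin h) * (r * cos (p + h))"
    and "\<rho> * sin (p + d) = \<rho> * sin (h - d) / (r * sin h) * (r * sin p) + \<rho> * sin d / (r * sin h) * (r * sin (p + h))"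
proof -
  have "\<rho> * sin (h - d) / (r * sin h) * (r * cos p) + \<rho> * sin d / (r * sin h) * (r * cos (p + h))
     = \<rho> * (sin (h - d) * cos p + sin d * cos (p + h)) / sin h"
    using assms by (simp add: field_simps)
  also have "\<dots> = \<rho> * cos (p + d)" unfolding cone_trig_key using assms by simp
  finally show "\<rho> * cos (p + d) = \<rho> * sin (h - d) / (r * sin h) * (r * cos p) + \<rho> * sin d / (r * sin h) * (r * cos (p + h))" ..
  have "\<rho> * sin (h - d) / (r * sin h) * (r * sin p) + \<rho> * sin d / (r * sin h) * (r * sin (p + h))
     = \<rho> * (sin (h - d) * sin p + sin d * sin (p + h)) / sin h"
    using assms by (simp add: field_simps)
  also have "\<dots> = \<rho> * sin (p + d)" unfolding cone_trig_key using assms by simp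
  finally show "\<rho> * sin (p + d) = \<rho> * sin (h - d) / (r * sin h) * (r * sin p) + \<rho> * sin d / (r * sin h) * (r * sin (p + h))" ..
qed

context
  fixes n :: nat and r th :: real
  assumes n2: "2 \<le> n" and rpos: "0 < r"
begin

lemma cone: "\<exists>K \<alpha> \<beta>. 0 \<le> \<alpha> \<and> 0 \<le> \<beta> \<and> y = \<alpha> *\<^sub>R VV n r th K + \<beta> *\<^sub>R VV n r th (K + 1)"
proof (cases "y = 0")
  case True
  show ?thesis by (rule exI[where x=0], rule exI[where x=0], rule exI[where x=0]) (simp add: True)
next
  case False
  define \<rho> where "\<rho> = sqrt (y$1^2 + y$2^2)"
  have "y$1 \<noteq> 0 \<or> y$2 \<noteq> 0" using False by (auto simp: vec_eq_iff forall_2)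
  hence ss: "y$1^2 + y$2^2 > 0" by (auto simp: add_pos_nonneg add_nonneg_pos)
  hence \<rho>0: "\<rho> > 0" unfolding \<rho>_def by simp
  have \<rho>2: "\<rho>^2 = y$1^2 + y$2^2" unfolding \<rho>_def using ss by simp
  have "(y$1/\<rho>)^2 + (y$2/\<rho>)^2 = (y$1^2 + y$2^2) / \<rho>^2" by (simp add: power_divide add_divide_distrib)
  also have "\<dots> = 1"
  proof -
    have ne: "y$1^2 + y$2^2 \<noteq> 0" using ss by linarith
    show ?thesis unfolding \<rho>2 using ne by (rule div_self)
  qed
  finally have "(y$1/\<rho>)^2 + (y$2/\<rho>)^2 = 1" .
  then obtain \<psi> where c1: "y$1/\<rho> = cos \<psi>" and c2: "y$2/\<rho> = sin \<psi>" using sincos_total_2pi by metis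
  define h where "h = pi / real n"
  have h0: "0 < h" "h < pi" using n2 by (auto simp: h_def field_simps)
  define K where "K = \<lfloor>(\<psi> - th) / h\<rfloor>"
  define d where "d = \<psi> - th - real_of_int K * h"
  have "real_of_int K \<le> (\<psi> - th) / h" unfolding K_def by (rule of_int_floor_le)
  hence "real_of_int K * h \<le> \<psi> - th" using h0 by (simp add: pos_le_divide_eq)
  hence d0: "0 \<le> d" unfolding d_def by simp
  have "(\<psi> - th) / h < real_of_int K + 1" unfolding K_def by (rule real_of_int_floor_add_one_gt)
  hence "\<psi> - th < (real_of_int K + 1) * h" using h0 by (simp add: divide_less_eq)
  hence d1: "d < h" unfolding d_def by (simp add: algebra_simps)
  have sh: "sin h > 0" using h0 by (intro sin_gt_zero) auto
  define \<alpha> where "\<alpha> = \<rho> * sin (h - d) / (r * sin h)"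
  define \<beta> where "\<beta> = \<rho> * sin d / (r * sin h)"
  have a0: "0 \<le> \<alpha>" unfolding \<alpha>_def using \<rho>0 rpos sh d0 d1 h0
    by (intro divide_nonneg_pos mult_nonneg_nonneg sin_ge_zero mult_pos_pos) auto
  have b0: "0 \<le> \<beta>" unfolding \<beta>_def using \<rho>0 rpos sh d0 d1 h0
    by (intro divide_nonneg_pos mult_nonneg_nonneg sin_ge_zero mult_pos_pos) auto
  define p where "p = th + real_of_int K * h"
  have psi: "\<psi> = p + d" unfolding p_def d_def by simp
  have V0: "VV n r th K = vector [r * cos p, r * sin p]" unfolding VV_def pt_def p_def h_def ..
  have "th + real_of_int (K + 1) * (pi / real n) = p + h" unfolding p_def h_def by (simp add: algebra_simps add_divide_distrib)
  hence V1: "VV n r th (K + 1) = vector [r * cos (p + h), r * sin (p + h)]" unfolding VV_def pt_def by simp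
  have y1: "y$1 = \<rho> * cos (p + d)" using c1 \<rho>0 psi by (simp add: field_simps)
  have y2: "y$2 = \<rho> * sin (p + d)" using c2 \<rho>0 psi by (simp add: field_simps)
  have "y = \<alpha> *\<^sub>R VV n r th K + \<beta> *\<^sub>R VV n r th (K + 1)"
    unfolding V0 V1 \<alpha>_def \<beta>_def using cone_trig[of h r \<rho> p d] sh rpos y1 y2
    by (simp add: vec_eq_iff forall_2)
  thus ?thesis using a0 b0 by blast
qed


abbreviation "BB \<equiv> reg_ball n r th"

lemma in_tB:
  assumes "0 \<le> \<alpha>" "0 \<le> \<beta>" "0 < t" "\<alpha> + \<beta> \<le> t"
  shows "\<alpha> *\<^sub>R VV n r th K + \<beta> *\<^sub>R VV n r th (K + 1) \<in> (\<lambda>z. t *\<^sub>R z) ` BB"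
proof (cases "\<alpha> + \<beta> = 0")
  case True
  hence "\<alpha> = 0" "\<beta> = 0" using assms by auto
  thus ?thesis using zero_B[OF n2 rpos] by (auto intro!: image_eqI[where x=0])
next
  case False
  define s where "s = \<alpha> + \<beta>"
  have s0: "s > 0" using False assms unfolding s_def by linarith
  define w where "w = (\<alpha> / s) *\<^sub>R VV n r th K + (\<beta> / s) *\<^sub>R VV n r th (K + 1)"
  have wB: "w \<in> BB" unfolding w_def
    using s0 assms by (intro convexD[OF convex_B[OF n2 rpos] VV_B[OF n2 rpos] VV_B[OF n2 rpos]])
      (auto simp: s_def add_divide_distrib[symmetric])
  define z where "z = (s / t) *\<^sub>R w + (1 - s / t) *\<^sub>R 0"
  have zB: "z \<in> BB" unfolding z_def
    using s0 assms by (intro convexD[OF convex_B[OF n2 rpos] wB zero_B[OF n2 rpos]])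
      (auto simp: s_def field_simps)
  have "t *\<^sub>R z = \<alpha> *\<^sub>R VV n r th K + \<beta> *\<^sub>R VV n r th (K + 1)"
    unfolding z_def w_def using s0 assms(3) by (simp add: scaleR_add_right)
  thus ?thesis using zB by (auto intro!: image_eqI[where x=z])
qed

lemma bdd_set: "bdd_below {t. 0 < t \<and> y \<in> (\<lambda>z. t *\<^sub>R z) ` BB}"
  by (rule bdd_belowI[where m=0]) auto

lemma bn_le: "0 < t \<Longrightarrow> y \<in> (\<lambda>z. t *\<^sub>R z) ` BB \<Longrightarrow> bnorm BB y \<le> t"
  unfolding bnorm_def by (rule cInf_lower[OF _ bdd_set]) auto

lemma absorb: "\<exists>t>0. y \<in> (\<lambda>z. t *\<^sub>R z) ` BB"
proof -
  obtain K \<alpha> \<beta> where *: "0 \<le> \<alpha>" "0 \<le> \<beta>" "y = \<alpha> *\<^sub>R VV n r th K + \<beta> *\<^sub>R VV n r th (K + 1)"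
    using cone by blast
  have "y \<in> (\<lambda>z. (\<alpha> + \<beta> + 1) *\<^sub>R z) ` BB" unfolding *(3) using *(1,2) by (intro in_tB) auto
  moreover have "\<alpha> + \<beta> + 1 > 0" using *(1,2) by simp
  ultimately show ?thesis by blast
qed

lemma bn_ge:
  assumes "linear g" "\<And>J. g (VV n r th J) \<le> 1"
  shows "g y \<le> bnorm BB y"
  unfolding bnorm_def
proof (rule cInf_greatest)
  show "{t. 0 < t \<and> y \<in> (\<lambda>z. t *\<^sub>R z) ` BB} \<noteq> {}" using absorb by auto
next
  fix t assume "t \<in> {t. 0 < t \<and> y \<in> (\<lambda>z. t *\<^sub>R z) ` BB}"
  then obtain z where t: "0 < t" and z: "z \<in> BB" "y = t *\<^sub>R z" by auto
  have "g z \<le> 1" using hull_bound[OF n2 rpos assms z(1)] .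
  hence "t * g z \<le> t" using t by (simp add: mult_le_cancel_left1)
  thus "g y \<le> t" using z(2) linear_cmul[OF assms(1)] by simp
qed

lemma bn_eq:
  assumes "0 \<le> \<alpha>" "0 \<le> \<beta>"
  shows "bnorm BB (\<alpha> *\<^sub>R VV n r th K + \<beta> *\<^sub>R VV n r th (K + 1)) = \<alpha> + \<beta>"
proof (rule antisym)
  show "bnorm BB (\<alpha> *\<^sub>R VV n r th K + \<beta> *\<^sub>R VV n r th (K + 1)) \<le> \<alpha> + \<beta>"
  proof (rule field_le_epsilon)
    fix e :: real assume "0 < e"
    thus "bnorm BB (\<alpha> *\<^sub>R VV n r th K + \<beta> *\<^sub>R VV n r th (K + 1)) \<le> \<alpha> + \<beta> + e"
      using assms by (intro bn_le in_tB) auto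
  qed
next
  let ?g = "FF n r th K (tan (pi / (2 * real n)))"
  have g1: "?g (VV n r th J) \<le> 1" for J
    using FF_bound[OF n2 rpos, of "tan (pi / (2 * real n))" th K J] by simp
  have "?g (\<alpha> *\<^sub>R VV n r th K + \<beta> *\<^sub>R VV n r th (K + 1)) = \<alpha> + \<beta>"
    using FF_VV[OF rpos] FF_next[OF n2 rpos] by (simp add: linear_add[OF linear_FF] linear_cmul[OF linear_FF])
  thus "\<alpha> + \<beta> \<le> bnorm BB (\<alpha> *\<^sub>R VV n r th K + \<beta> *\<^sub>R VV n r th (K + 1))"
    using bn_ge[OF linear_FF g1] by metis
qed

lemma bn_VV: "bnorm BB (VV n r th K) = 1"
  using bn_eq[of 1 0 K] by simp

lemma bn_0: "bnorm BB 0 = 0"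
  using bn_eq[of 0 0 0] by simp

lemma lin_bound:
  assumes "linear f" "\<And>J. \<bar>f (VV n r th J)\<bar> \<le> M"
  shows "\<bar>f y\<bar> \<le> M * bnorm BB y"
proof -
  obtain K \<alpha> \<beta> where *: "0 \<le> \<alpha>" "0 \<le> \<beta>" "y = \<alpha> *\<^sub>R VV n r th K + \<beta> *\<^sub>R VV n r th (K + 1)"
    using cone by blast
  have "f y = \<alpha> * f (VV n r th K) + \<beta> * f (VV n r th (K + 1))"
    using *(3) by (simp add: linear_add[OF assms(1)] linear_cmul[OF assms(1)])
  hence "\<bar>f y\<bar> \<le> \<alpha> * \<bar>f (VV n r th K)\<bar> + \<beta> * \<bar>f (VV n r th (K + 1))\<bar>"
    using *(1,2) by (simp add: abs_mult order_trans[OF abs_triangle_ineq])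
  also have "\<dots> \<le> \<alpha> * M + \<beta> * M"
    using *(1,2) assms(2) by (intro add_mono mult_left_mono) auto
  also have "\<dots> = M * bnorm BB y"
  proof -
    have "bnorm BB y = \<alpha> + \<beta>" unfolding *(3) by (rule bn_eq[OF *(1,2)])
    thus ?thesis by (simp add: algebra_simps)
  qed
  finally show ?thesis .
qed

lemma dn_le:
  assumes "linear f" "\<And>J. \<bar>f (VV n r th J)\<bar> \<le> M"
  shows "dnorm BB f \<le> M"
  unfolding dnorm_def
proof (rule cSup_least)
  have "bnorm BB 0 \<le> 1" by (simp add: bn_0)
  thus "{\<bar>f x\<bar> |x. bnorm BB x \<le> 1} \<noteq> {}" by blast
next
  fix v assume "v \<in> {\<bar>f x\<bar> |x. bnorm BB x \<le> 1}"
  then obtain x where v: "v = \<bar>f x\<bar>" and x: "bnorm BB x \<le> 1" by auto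
  have M0: "0 \<le> M" using assms(2)[of 0] by linarith
  have "\<bar>f x\<bar> \<le> M * bnorm BB x" by (rule lin_bound[OF assms])
  also have "\<dots> \<le> M" using M0 x by (simp add: mult_left_le)
  finally show "v \<le> M" using v by simp
qed

lemma dn_eq:
  assumes "linear f" "\<And>J. \<bar>f (VV n r th J)\<bar> \<le> M" "\<bar>f (VV n r th J0)\<bar> = M"
  shows "dnorm BB f = M"
  unfolding dnorm_def
proof (rule cSup_eq_maximum)
  show "M \<in> {\<bar>f x\<bar> |x. bnorm BB x \<le> 1}" using assms(3) bn_VV[of J0] by force
next
  fix v assume "v \<in> {\<bar>f x\<bar> |x. bnorm BB x \<le> 1}"
  then obtain x where v: "v = \<bar>f x\<bar>" and x: "bnorm BB x \<le> 1" by auto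
  have M0: "0 \<le> M" using assms(2)[of 0] by linarith
  have "\<bar>f x\<bar> \<le> M * bnorm BB x" by (rule lin_bound[OF assms(1,2)])
  also have "\<dots> \<le> M" using M0 x by (simp add: mult_left_le)
  finally show "v \<le> M" using v by simp
qed

lemma dn_ge_VV:
  assumes "linear f"
  shows "\<bar>f (VV n r th J)\<bar> \<le> dnorm BB f"
  unfolding dnorm_def
proof (rule cSup_upper)
  show "\<bar>f (VV n r th J)\<bar> \<in> {\<bar>f x\<bar> |x. bnorm BB x \<le> 1}" using bn_VV[of J] by force
  define M0 where "M0 = \<bar>f (VV n r th 0)\<bar> + \<bar>f (WW n r th 0)\<bar>"
  have b: "\<bar>f (VV n r th I)\<bar> \<le> M0" for I
  proof -
    have "f (VV n r th I) = cos (real_of_int (I - 0) * (pi / real n)) * f (VV n r th 0)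
      + sin (real_of_int (I - 0) * (pi / real n)) * f (WW n r th 0)" by (rule lin_VV[OF assms])
    also have "\<bar>\<dots>\<bar> \<le> \<bar>f (VV n r th 0)\<bar> + \<bar>f (WW n r th 0)\<bar>"
      by (rule order_trans[OF abs_triangle_ineq add_mono])
         (auto simp: abs_mult intro!: mult_left_le_one_le abs_sin_le_one abs_cos_le_one
           intro: mult_le_one order_trans[OF mult_right_mono[OF abs_cos_le_one]] order_trans[OF mult_right_mono[OF abs_sin_le_one]])
    finally show ?thesis unfolding M0_def .
  qed
  have M0: "0 \<le> M0" unfolding M0_def by simp
  show "bdd_above {\<bar>f x\<bar> |x. bnorm BB x \<le> 1}"
  proof (rule bdd_aboveI[where M=M0])
    fix v assume "v \<in> {\<bar>f x\<bar> |x. bnorm BB x \<le> 1}"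
    then obtain x where v: "v = \<bar>f x\<bar>" and x: "bnorm BB x \<le> 1" by auto
    have "\<bar>f x\<bar> \<le> M0 * bnorm BB x" by (rule lin_bound[OF assms b])
    also have "\<dots> \<le> M0" using M0 x by (simp add: mult_left_le)
    finally show "v \<le> M0" using v by simp
  qed
qed

end



definition Ms :: "nat \<Rightarrow> real" where
  "Ms n = (if even n then 1 else cos (pi / (2 * real n)))"

definition Val :: "nat \<Rightarrow> real" where
  "Val n = 2 * tan (pi / (2 * real n)) * Ms n"

lemma Ms_bound: assumes "n \<ge> 2" shows "\<bar>sin (real_of_int m * (pi / real n))\<bar> \<le> Ms n"
  using L_sin_odd[of n m] assms abs_sin_le_one by (auto simp: Ms_def)

lemma Ms_attain: assumes "n \<ge> 2" shows "\<exists>m. \<bar>sin (real_of_int m * (pi / real n))\<bar> = Ms n"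
proof (cases "even n")
  case True
  then obtain k where k: "n = 2 * k" by blast
  have e: "real_of_int (int k) * (pi / real n) = pi / 2" using k assms by simp
  show ?thesis
  proof (intro exI[of _ "int k"])
    show "\<bar>sin (real_of_int (int k) * (pi / real n))\<bar> = Ms n" unfolding e using True by (simp add: Ms_def)
  qed
next
  case False
  then obtain k where k: "n = 2 * k + 1" using oddE by blast
  have e: "real_of_int (int k) * (pi / real n) = pi / 2 - pi / (2 * real n)"
    using k assms by (simp add: field_simps)
  have p0: "0 \<le> pi / (2 * real n)" by simp
  have p1: "pi / (2 * real n) \<le> pi / 2" using assms by (simp add: field_simps)
  have p2: "- (pi / 2) \<le> pi / (2 * real n)" using p0 pi_gt_zero by linarith
  have c: "cos (pi / (2 * real n)) \<ge> 0" using p2 p1 by (rule cos_ge_zero)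
  show ?thesis
  proof (intro exI[of _ "int k"])
    show "\<bar>sin (real_of_int (int k) * (pi / real n))\<bar> = Ms n" unfolding e sin_cos_eq using False c by (simp add: Ms_def)
  qed
qed

lemma tan_pos: assumes "n \<ge> 2" shows "tan (pi / (2 * real n)) > 0"
  using assms by (intro tan_gt_zero) (auto simp: field_simps)

lemma S_bound:
  assumes n2: "n \<ge> 2" and "linear f" "f (VV n r th K) = 1" "\<And>J. \<bar>f (VV n r th J)\<bar> \<le> 1"
  shows "\<bar>f (WW n r th K)\<bar> \<le> tan (pi / (2 * real n))"
proof -
  define a where "a = pi / (2 * real n)"
  define S where "S = f (WW n r th K)"
  have a0: "0 < a" "a < pi / 2" using n2 by (auto simp: a_def field_simps)
  have ca: "cos a > 0" using a0 by (intro cos_gt_zero) auto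
  have sa: "sin a > 0" using a0 by (intro sin_gt_zero) auto
  have h: "pi / real n = 2 * a" unfolding a_def by simp
  have "f (VV n r th (K + 1)) = cos (2 * a) + sin (2 * a) * S"
    using lin_VV[OF assms(2), of n r th "K + 1" K] assms(3) unfolding S_def h by simp
  hence p: "cos (2 * a) + sin (2 * a) * S \<le> 1" using assms(4)[of "K + 1"] by simp
  have "f (VV n r th (K - 1)) = cos (2 * a) - sin (2 * a) * S"
    using lin_VV[OF assms(2), of n r th "K - 1" K] assms(3) unfolding S_def h by simp
  hence m: "cos (2 * a) - sin (2 * a) * S \<le> 1" using assms(4)[of "K - 1"] by simp
  have "sin (2 * a) * \<bar>S\<bar> \<le> 1 - cos (2 * a)" using p m by (cases "S \<ge> 0") (auto simp: abs_if)
  hence "2 * sin a * cos a * \<bar>S\<bar> \<le> 2 * sin a * sin a" by (simp add: sin_double cos_double_sin power2_eq_square)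
  hence "sin a * (cos a * \<bar>S\<bar>) \<le> sin a * sin a" by (simp add: algebra_simps)
  hence "cos a * \<bar>S\<bar> \<le> sin a" using sa by simp
  hence "\<bar>S\<bar> \<le> sin a / cos a" using ca by (simp add: field_simps)
  thus ?thesis unfolding S_def a_def tan_def .
qed

context
  fixes n :: nat and r th :: real
  assumes n2: "2 \<le> n" and rpos: "0 < r"
begin

lemma UB:
  assumes "linear f" "linear g" "f (VV n r th K) = 1" "g (VV n r th K) = 1"
    "\<And>J. \<bar>f (VV n r th J)\<bar> \<le> 1" "\<And>J. \<bar>g (VV n r th J)\<bar> \<le> 1"
  shows "dnorm (reg_ball n r th) (\<lambda>y. f y - g y) \<le> Val n"
proof (rule dn_le[OF n2 rpos linear_diff'[OF assms(1,2)]])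
  fix J
  define c where "c = cos (real_of_int (J - K) * (pi / real n))"
  define s where "s = sin (real_of_int (J - K) * (pi / real n))"
  have "f (VV n r th J) - g (VV n r th J) = s * (f (WW n r th K) - g (WW n r th K))"
    using lin_VV[OF assms(1), of n r th J K] lin_VV[OF assms(2), of n r th J K] assms(3,4)
    unfolding c_def[symmetric] s_def[symmetric] by (simp add: algebra_simps)
  hence "\<bar>f (VV n r th J) - g (VV n r th J)\<bar> = \<bar>s\<bar> * \<bar>f (WW n r th K) - g (WW n r th K)\<bar>"
    by (simp add: abs_mult)
  also have "\<dots> \<le> Ms n * (2 * tan (pi / (2 * real n)))"
  proof (rule mult_mono)
    show "\<bar>s\<bar> \<le> Ms n" unfolding s_def by (rule Ms_bound[OF n2])
    have "\<bar>f (WW n r th K)\<bar> \<le> tan (pi / (2 * real n))" by (rule S_bound[OF n2 assms(1,3,5)])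
    moreover have "\<bar>g (WW n r th K)\<bar> \<le> tan (pi / (2 * real n))" by (rule S_bound[OF n2 assms(2,4,6)])
    ultimately show "\<bar>f (WW n r th K) - g (WW n r th K)\<bar> \<le> 2 * tan (pi / (2 * real n))" by linarith
    show "0 \<le> Ms n" using Ms_bound[OF n2, of 0] by linarith
  qed simp
  finally show "\<bar>f (VV n r th J) - g (VV n r th J)\<bar> \<le> Val n" by (simp add: Val_def algebra_simps)
qed

lemma J_bound:
  assumes "f \<in> Jset (reg_ball n r th) x"
  shows "linear f" "\<And>J. \<bar>f (VV n r th J)\<bar> \<le> 1"
proof -
  have l: "linear f" and d: "dnorm (reg_ball n r th) f = 1" using assms by (auto simp: Jset_def)
  show "linear f" by (rule l)
  fix J
  have "\<bar>f (VV n r th J)\<bar> \<le> dnorm (reg_ball n r th) f" by (rule dn_ge_VV[OF n2 rpos l])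
  thus "\<bar>f (VV n r th J)\<bar> \<le> 1" using d by simp
qed

lemma FF_J:
  assumes "s = tan (pi / (2 * real n)) \<or> s = - tan (pi / (2 * real n))"
  shows "dnorm (reg_ball n r th) (FF n r th K s) = 1"
proof (rule dn_eq[OF n2 rpos])
  show "linear (FF n r th K s)" by (rule linear_FF)
  show "\<bar>FF n r th K s (VV n r th J)\<bar> \<le> 1" for J by (rule FF_bound[OF n2 rpos assms])
  show "\<bar>FF n r th K s (VV n r th K)\<bar> = 1" by (simp add: FF_VV[OF rpos])
qed

lemma diam_vertex: "diamJ (reg_ball n r th) (VV n r th K) = Val n"
  unfolding diamJ_def
proof (rule cSup_eq_maximum)
  let ?t = "tan (pi / (2 * real n))"
  let ?f = "FF n r th K ?t" and ?g = "FF n r th K (- ?t)"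
  have fJ: "?f \<in> Jset (reg_ball n r th) (VV n r th K)"
    using FF_J[of ?t K] FF_VV[OF rpos] bn_VV[OF n2 rpos] linear_FF by (simp add: Jset_def)
  have gJ: "?g \<in> Jset (reg_ball n r th) (VV n r th K)"
    using FF_J[of "- ?t" K] FF_VV[OF rpos] bn_VV[OF n2 rpos] linear_FF by (simp add: Jset_def)
  have d: "?f (VV n r th J) - ?g (VV n r th J) = 2 * ?t * sin (real_of_int (J - K) * (pi / real n))" for J
    unfolding FF_VVJ[OF rpos] by simp
  have tp: "?t > 0" by (rule tan_pos[OF n2])
  obtain m where m: "\<bar>sin (real_of_int m * (pi / real n))\<bar> = Ms n" using Ms_attain[OF n2] by blast
  have "dnorm (reg_ball n r th) (\<lambda>y. ?f y - ?g y) = Val n"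
  proof (rule dn_eq[OF n2 rpos])
    show "linear (\<lambda>y. ?f y - ?g y)" by (rule linear_diff'[OF linear_FF linear_FF])
    fix J
    show "\<bar>?f (VV n r th J) - ?g (VV n r th J)\<bar> \<le> Val n"
      unfolding d Val_def using tp Ms_bound[OF n2, of "J - K"] by (simp add: abs_mult)
    show "\<bar>?f (VV n r th (K + m)) - ?g (VV n r th (K + m))\<bar> = Val n"
      unfolding d Val_def using tp m by (simp add: abs_mult)
  qed
  thus "Val n \<in> {dnorm (reg_ball n r th) (\<lambda>y. f y - g y) |f g.
          f \<in> Jset (reg_ball n r th) (VV n r th K) \<and> g \<in> Jset (reg_ball n r th) (VV n r th K)}"
    using fJ gJ by force
next
  fix v assume "v \<in> {dnorm (reg_ball n r th) (\<lambda>y. f y - g y) |f g.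
          f \<in> Jset (reg_ball n r th) (VV n r th K) \<and> g \<in> Jset (reg_ball n r th) (VV n r th K)}"
  then obtain f g where v: "v = dnorm (reg_ball n r th) (\<lambda>y. f y - g y)"
    and f: "f \<in> Jset (reg_ball n r th) (VV n r th K)" and g: "g \<in> Jset (reg_ball n r th) (VV n r th K)" by auto
  have "f (VV n r th K) = 1" "g (VV n r th K) = 1" using f g bn_VV[OF n2 rpos] by (auto simp: Jset_def)
  thus "v \<le> Val n" unfolding v using J_bound[OF f] J_bound[OF g] by (intro UB) auto
qed


lemma diam_le:
  assumes y1: "bnorm (reg_ball n r th) y = 1"
  shows "diamJ (reg_ball n r th) y \<le> Val n"
proof -
  obtain K \<alpha> \<beta> where ab: "0 \<le> \<alpha>" "0 \<le> \<beta>" and y: "y = \<alpha> *\<^sub>R VV n r th K + \<beta> *\<^sub>R VV n r th (K + 1)"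
    using cone[OF n2 rpos] by blast
  have s1: "\<alpha> + \<beta> = 1" using bn_eq[OF n2 rpos ab, where th=th and K=K] y y1 by simp
  define L where "L = (if \<alpha> > 0 then K else K + 1)"
  have key: "f (VV n r th L) = 1" if f: "f \<in> Jset (reg_ball n r th) y" for f
  proof -
    have l: "linear f" and b: "\<And>J. \<bar>f (VV n r th J)\<bar> \<le> 1" using J_bound[OF f] by auto
    have fy: "f y = 1" using f y1 by (simp add: Jset_def)
    have "f y = \<alpha> * f (VV n r th K) + \<beta> * f (VV n r th (K + 1))"
      unfolding y by (simp add: linear_add[OF l] linear_cmul[OF l])
    hence e: "\<alpha> * (1 - f (VV n r th K)) + \<beta> * (1 - f (VV n r th (K + 1))) = 0"
      using fy s1 by (simp add: algebra_simps)
    have t1: "0 \<le> \<alpha> * (1 - f (VV n r th K))" using ab b[of K] by (intro mult_nonneg_nonneg) (auto simp: abs_le_iff)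
    have t2: "0 \<le> \<beta> * (1 - f (VV n r th (K + 1)))" using ab b[of "K + 1"] by (intro mult_nonneg_nonneg) (auto simp: abs_le_iff)
    have z1: "\<alpha> * (1 - f (VV n r th K)) = 0" using e t1 t2 by linarith
    have z2: "\<beta> * (1 - f (VV n r th (K + 1))) = 0" using e t1 t2 by linarith
    show ?thesis
    proof (cases "\<alpha> > 0")
      case True thus ?thesis using z1 unfolding L_def by simp
    next
      case False
      hence "\<beta> > 0" using ab s1 by linarith
      thus ?thesis using z2 False unfolding L_def by simp
    qed
  qed
  show ?thesis
    unfolding diamJ_def
  proof (rule cSup_least)
    let ?g = "FF n r th K (tan (pi / (2 * real n)))"
    have "?g y = \<alpha> + \<beta>"
      unfolding y using FF_VV[OF rpos] FF_next[OF n2 rpos]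
      by (simp add: linear_add[OF linear_FF] linear_cmul[OF linear_FF])
    hence "?g \<in> Jset (reg_ball n r th) y" using FF_J[of "tan (pi / (2 * real n))" K] s1 y1 linear_FF
      by (simp add: Jset_def)
    thus "{dnorm (reg_ball n r th) (\<lambda>ya. f ya - g ya) |f g.
          f \<in> Jset (reg_ball n r th) y \<and> g \<in> Jset (reg_ball n r th) y} \<noteq> {}" by blast
  next
    fix v assume "v \<in> {dnorm (reg_ball n r th) (\<lambda>ya. f ya - g ya) |f g.
          f \<in> Jset (reg_ball n r th) y \<and> g \<in> Jset (reg_ball n r th) y}"
    then obtain f g where v: "v = dnorm (reg_ball n r th) (\<lambda>ya. f ya - g ya)"
      and f: "f \<in> Jset (reg_ball n r th) y" and g: "g \<in> Jset (reg_ball n r th) y" by auto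
    show "v \<le> Val n" unfolding v using J_bound[OF f] J_bound[OF g] key[OF f] key[OF g]
      by (intro UB) auto
  qed
qed

lemma main:
  assumes "x extreme_point_of (reg_ball n r th)"
  shows "diamJ (reg_ball n r th) x = Val n" "calE (reg_ball n r th) = Val n"
proof -
  have "x \<in> vset n r th" using assms unfolding B_hull[OF n2 rpos] by (rule extreme_point_of_convex_hull)
  then obtain K where x: "x = VV n r th K" using vset_VV[OF n2 rpos] by blast
  show d: "diamJ (reg_ball n r th) x = Val n" unfolding x by (rule diam_vertex)
  show "calE (reg_ball n r th) = Val n"
    unfolding calE_def
  proof (rule cSup_eq_maximum)
    show "Val n \<in> {diamJ (reg_ball n r th) x |x. bnorm (reg_ball n r th) x = 1}"
      using d bn_VV[OF n2 rpos, where th=th and K=K] x by force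
    fix v assume "v \<in> {diamJ (reg_ball n r th) x |x. bnorm (reg_ball n r th) x = 1}"
    thus "v \<le> Val n" using diam_le by auto
  qed
qed

end

theorem theorem5p1:
  fixes n :: nat and r th :: real and x :: "real^2"
  assumes "n \<ge> 2" and "r > 0"
    and "x extreme_point_of (reg_ball n r th)"
  shows "diamJ (reg_ball n r th) x = calE (reg_ball n r th)
    \<and> calE (reg_ball n r th) =
       (if even n then 2 * tan (pi / (2 * real n))
        else 2 * tan (pi / (2 * real n)) * sin ((real n - 1) * pi / (2 * real n)))"
proof -
  have m1: "diamJ (reg_ball n r th) x = Val n" and m2: "calE (reg_ball n r th) = Val n"
    using main[OF assms] by auto
  have "sin ((real n - 1) * pi / (2 * real n)) = cos (pi / (2 * real n))"
  proof -
    have "(real n - 1) * pi / (2 * real n) = pi / 2 - pi / (2 * real n)"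
      using assms(1) by (simp add: field_simps)
    thus ?thesis by (simp add: sin_cos_eq)
  qed
  thus ?thesis using m1 m2 by (simp add: Val_def Ms_def)
qed


end
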